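(* Let $\gamma(s)$ be an arc-length parametrized proper triharmonic curve immersed in a 3-dimensional Riemannian manifold $M^3$, with curvature $\kappa(s)$ and torsion $\tau(s)$. Then $$2\frac{d}{ds}\left(\kappa^2\kappa''\right)=\kappa\frac{d}{ds}\left(\kappa^2\left[\kappa^2+\tau^2\right]\right).$$
   Context: For an arc-length parametrized curve $\gamma$ in a Riemannian manifold $M$ with Levi-Civita connection $\nabla$, curvature tensor $R^M(X,Y)=\nabla_X\nabla_Y-\nabla_Y\nabla_X-\nabla_{[X,Y]}$ and $T=\gamma'$, $\gamma$ is triharmonic if $\nabla_T^5T+R^M(\nabla_T^3T,T)T-R^M(\nabla_T^2T,\nabla_TT)T=0$; it is proper triharmonic if it is triharmonic but not a geodesic. For a non-geodesic curve in $M^3$, the Frenet frame $\{T,N,B\}$, curvature $\kappa$ and torsion $\tau$ are defined by $\nabla_TT=\kappa N$, $\nabla_TN=-\kappa T+\tau B$, $\nabla_TB=-\tau N$. *)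

theory Defs
  imports "HOL-Analysis.Analysis"
begin

text \<open>Local model of a Riemannian 3-manifold: an open set U of real^3 (a coordinate
chart) carrying a smooth Riemannian metric g, given as a symmetric positive definite
matrix-valued function.  Vector fields along a curve are given by their coordinate
components.\<close>

type_synonym metric = "real^3 \<Rightarrow> real^3^3"

definition pd :: "3 \<Rightarrow> (real^3 \<Rightarrow> real) \<Rightarrow> real^3 \<Rightarrow> real" where
  "pd i f x = deriv (\<lambda>t. f (x + t *\<^sub>R axis i 1)) 0"

fun iter_pd :: "3 list \<Rightarrow> (real^3 \<Rightarrow> real) \<Rightarrow> real^3 \<Rightarrow> real" where
  "iter_pd [] f = f"
| "iter_pd (i # is) f = pd i (iter_pd is f)"

definition smooth_on_R3 :: "(real^3) set \<Rightarrow> (real^3 \<Rightarrow> real) \<Rightarrow> bool" where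
  "smooth_on_R3 U f \<longleftrightarrow> (\<forall>is. \<forall>x\<in>U. iter_pd is f differentiable (at x))"

definition smooth_fun :: "real set \<Rightarrow> (real \<Rightarrow> real) \<Rightarrow> bool" where
  "smooth_fun I f \<longleftrightarrow> (\<forall>n. \<forall>s\<in>I. (deriv ^^ n) f differentiable (at s))"

definition smooth_vfield :: "real set \<Rightarrow> (real \<Rightarrow> real^3) \<Rightarrow> bool" where
  "smooth_vfield I V \<longleftrightarrow> (\<forall>k. smooth_fun I (\<lambda>s. V s $ k))"

definition riemannian_metric :: "(real^3) set \<Rightarrow> metric \<Rightarrow> bool" where
  "riemannian_metric U g \<longleftrightarrow> open U \<and>
     (\<forall>i j. smooth_on_R3 U (\<lambda>x. g x $ i $ j)) \<and>
     (\<forall>x\<in>U. transpose (g x) = g x) \<and>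
     (\<forall>x\<in>U. \<forall>v. v \<noteq> 0 \<longrightarrow> v \<bullet> (g x *v v) > 0)"

definition ginner :: "metric \<Rightarrow> real^3 \<Rightarrow> real^3 \<Rightarrow> real^3 \<Rightarrow> real" where
  "ginner g x v w = v \<bullet> (g x *v w)"

definition christoffel :: "metric \<Rightarrow> real^3 \<Rightarrow> 3 \<Rightarrow> 3 \<Rightarrow> 3 \<Rightarrow> real" where
  "christoffel g x k i j = (1/2) * (\<Sum>l\<in>UNIV. matrix_inv (g x) $ k $ l *
      (pd i (\<lambda>y. g y $ j $ l) x + pd j (\<lambda>y. g y $ i $ l) x - pd l (\<lambda>y. g y $ i $ j) x))"

definition vel :: "(real \<Rightarrow> real^3) \<Rightarrow> real \<Rightarrow> real^3" where
  "vel \<gamma> s = (\<chi> k. deriv (\<lambda>t. \<gamma> t $ k) s)"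

definition covD :: "metric \<Rightarrow> (real \<Rightarrow> real^3) \<Rightarrow> (real \<Rightarrow> real^3) \<Rightarrow> real \<Rightarrow> real^3" where
  "covD g \<gamma> V s = (\<chi> k. deriv (\<lambda>t. V t $ k) s +
      (\<Sum>i\<in>UNIV. \<Sum>j\<in>UNIV. christoffel g (\<gamma> s) k i j * vel \<gamma> s $ i * V s $ j))"

text \<open>Components R^l_{ijk} of R(d_i,d_j)d_k = R^l_{ijk} d_l, for
  R(X,Y) = nabla_X nabla_Y - nabla_Y nabla_X - nabla_[X,Y].\<close>
definition riem_coeff :: "metric \<Rightarrow> real^3 \<Rightarrow> 3 \<Rightarrow> 3 \<Rightarrow> 3 \<Rightarrow> 3 \<Rightarrow> real" where
  "riem_coeff g x l i j k =
     pd i (\<lambda>y. christoffel g y l j k) x - pd j (\<lambda>y. christoffel g y l i k) x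
     + (\<Sum>m\<in>UNIV. christoffel g x l i m * christoffel g x m j k
                 - christoffel g x l j m * christoffel g x m i k)"

definition curvR :: "metric \<Rightarrow> real^3 \<Rightarrow> real^3 \<Rightarrow> real^3 \<Rightarrow> real^3 \<Rightarrow> real^3" where
  "curvR g x X Y Z = (\<chi> l. \<Sum>i\<in>UNIV. \<Sum>j\<in>UNIV. \<Sum>k\<in>UNIV.
      riem_coeff g x l i j k * X $ i * Y $ j * Z $ k)"

definition nablaT :: "metric \<Rightarrow> (real \<Rightarrow> real^3) \<Rightarrow> nat \<Rightarrow> real \<Rightarrow> real^3" where
  "nablaT g \<gamma> n = (covD g \<gamma> ^^ n) (vel \<gamma>)"

definition triharmonic :: "(real^3) set \<Rightarrow> metric \<Rightarrow> real set \<Rightarrow> (real \<Rightarrow> real^3) \<Rightarrow> bool" where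
  "triharmonic U g I \<gamma> \<longleftrightarrow> (\<forall>s\<in>I.
     nablaT g \<gamma> 5 s + curvR g (\<gamma> s) (nablaT g \<gamma> 3 s) (vel \<gamma> s) (vel \<gamma> s)
       - curvR g (\<gamma> s) (nablaT g \<gamma> 2 s) (nablaT g \<gamma> 1 s) (vel \<gamma> s) = 0)"

definition geodesic :: "metric \<Rightarrow> real set \<Rightarrow> (real \<Rightarrow> real^3) \<Rightarrow> bool" where
  "geodesic g I \<gamma> \<longleftrightarrow> (\<forall>s\<in>I. nablaT g \<gamma> 1 s = 0)"

definition proper_triharmonic :: "(real^3) set \<Rightarrow> metric \<Rightarrow> real set \<Rightarrow> (real \<Rightarrow> real^3) \<Rightarrow> bool" where
  "proper_triharmonic U g I \<gamma> \<longleftrightarrow> triharmonic U g I \<gamma> \<and> \<not> geodesic g I \<gamma>"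

definition arclength_curve :: "(real^3) set \<Rightarrow> metric \<Rightarrow> real set \<Rightarrow> (real \<Rightarrow> real^3) \<Rightarrow> bool" where
  "arclength_curve U g I \<gamma> \<longleftrightarrow> open I \<and> is_interval I \<and> smooth_vfield I \<gamma> \<and>
     (\<forall>s\<in>I. \<gamma> s \<in> U) \<and> (\<forall>s\<in>I. ginner g (\<gamma> s) (vel \<gamma> s) (vel \<gamma> s) = 1)"

definition frenet :: "metric \<Rightarrow> real set \<Rightarrow> (real \<Rightarrow> real^3) \<Rightarrow> (real \<Rightarrow> real^3) \<Rightarrow> (real \<Rightarrow> real^3)
     \<Rightarrow> (real \<Rightarrow> real) \<Rightarrow> (real \<Rightarrow> real) \<Rightarrow> bool" where
  "frenet g I \<gamma> N B \<kappa> \<tau> \<longleftrightarrow>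
     smooth_vfield I N \<and> smooth_vfield I B \<and> smooth_fun I \<kappa> \<and> smooth_fun I \<tau> \<and>
     (\<forall>s\<in>I. let x = \<gamma> s; T = vel \<gamma> s in
        ginner g x (N s) (N s) = 1 \<and> ginner g x (B s) (B s) = 1 \<and>
        ginner g x T (N s) = 0 \<and> ginner g x T (B s) = 0 \<and> ginner g x (N s) (B s) = 0) \<and>
     (\<forall>s\<in>I. covD g \<gamma> (vel \<gamma>) s = \<kappa> s *\<^sub>R N s \<and>
             covD g \<gamma> N s = - \<kappa> s *\<^sub>R vel \<gamma> s + \<tau> s *\<^sub>R B s \<and>
             covD g \<gamma> B s = - \<tau> s *\<^sub>R N s)"

end

theory Submission
  imports Defs
begin

lemma line_deriv:
  fixes f :: "'a::real_normed_vector \<Rightarrow> real"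
  assumes "f differentiable (at (y + t0 *\<^sub>R v))"
  shows "((\<lambda>t. f (y + t *\<^sub>R v)) has_real_derivative frechet_derivative f (at (y + t0 *\<^sub>R v)) v) (at t0)"
proof -
  let ?f' = "frechet_derivative f (at (y + t0 *\<^sub>R v))"
  have f: "(f has_derivative ?f') (at (y + t0 *\<^sub>R v))"
    using assms frechet_derivative_works by blast
  have l: "((\<lambda>t. y + t *\<^sub>R v) has_derivative (\<lambda>t. t *\<^sub>R v)) (at t0)"
    by (auto intro!: derivative_eq_intros)
  have "((f \<circ> (\<lambda>t. y + t *\<^sub>R v)) has_derivative (?f' \<circ> (\<lambda>t. t *\<^sub>R v))) (at t0)"
    by (rule diff_chain_at[OF l]) (use f in simp)
  moreover have "?f' \<circ> (\<lambda>t. t *\<^sub>R v) = (*) (?f' v)"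
    using linear_cmul[OF has_derivative_linear[OF f]] by (auto simp: o_def mult.commute)
  ultimately show ?thesis by (simp add: has_field_derivative_def o_def)
qed

lemma pd_eq_frechet:
  fixes f :: "real^3 \<Rightarrow> real"
  assumes "f differentiable (at x)"
  shows "pd i f x = frechet_derivative f (at x) (axis i 1)"
  using line_deriv[of f x 0 "axis i 1"] assms unfolding pd_def
  by (auto intro!: DERIV_imp_deriv)

lemma pd_has_deriv:
  fixes f :: "real^3 \<Rightarrow> real"
  assumes "f differentiable (at x)"
  shows "((\<lambda>t. f (x + t *\<^sub>R axis i 1)) has_real_derivative pd i f x) (at 0)"
  using line_deriv[of f x 0 "axis i 1"] assms pd_eq_frechet[OF assms] by auto

lemma pd_local:
  fixes f h :: "real^3 \<Rightarrow> real"
  assumes "open S" "x \<in> S" "\<And>y. y \<in> S \<Longrightarrow> f y = h y"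
  shows "pd i f x = pd i h x"
proof -
  obtain e where e: "e > 0" "ball x e \<subseteq> S" using assms openE by blast
  have "eventually (\<lambda>t::real. x + t *\<^sub>R axis i 1 \<in> S) (nhds 0)"
    unfolding eventually_nhds_metric
    by (rule exI[of _ e]) (use e in \<open>auto simp: dist_norm\<close>)
  then have "eventually (\<lambda>t. f (x + t *\<^sub>R axis i 1) = h (x + t *\<^sub>R axis i 1)) (nhds 0)"
    by (rule eventually_mono) (use assms in auto)
  then show ?thesis unfolding pd_def by (rule deriv_cong_ev) simp
qed

lemma pd_mult:
  fixes f h :: "real^3 \<Rightarrow> real"
  assumes "f differentiable (at x)" "h differentiable (at x)"
  shows "pd i (\<lambda>y. f y * h y) x = pd i f x * h x + f x * pd i h x"
proof -
  have "((\<lambda>t. f (x + t *\<^sub>R axis i 1) * h (x + t *\<^sub>R axis i 1)) has_real_derivative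
      (pd i f x * h x + f x * pd i h x)) (at 0)"
    using DERIV_mult[OF pd_has_deriv[OF assms(1)] pd_has_deriv[OF assms(2)]]
    by (simp add: mult.commute)
  then show ?thesis unfolding pd_def by (rule DERIV_imp_deriv)
qed

lemma pd_add:
  fixes f h :: "real^3 \<Rightarrow> real"
  assumes "f differentiable (at x)" "h differentiable (at x)"
  shows "pd i (\<lambda>y. f y + h y) x = pd i f x + pd i h x"
  unfolding pd_def
  by (rule DERIV_imp_deriv, rule DERIV_add[OF pd_has_deriv[OF assms(1)] pd_has_deriv[OF assms(2)], unfolded pd_def])

lemma pd_diff:
  fixes f h :: "real^3 \<Rightarrow> real"
  assumes "f differentiable (at x)" "h differentiable (at x)"
  shows "pd i (\<lambda>y. f y - h y) x = pd i f x - pd i h x"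
  unfolding pd_def
  by (rule DERIV_imp_deriv, rule DERIV_diff[OF pd_has_deriv[OF assms(1)] pd_has_deriv[OF assms(2)], unfolded pd_def])

lemma pd_cmult:
  fixes f :: "real^3 \<Rightarrow> real"
  assumes "f differentiable (at x)"
  shows "pd i (\<lambda>y. c * f y) x = c * pd i f x"
  unfolding pd_def
  by (rule DERIV_imp_deriv, rule DERIV_cmult[OF pd_has_deriv[OF assms(1)], unfolded pd_def])

lemma pd_const: "pd i (\<lambda>y. c) x = 0"
  unfolding pd_def by simp

lemma pd_sum:
  fixes F :: "'b \<Rightarrow> real^3 \<Rightarrow> real"
  assumes "finite A" "\<And>l. l \<in> A \<Longrightarrow> F l differentiable (at x)"
  shows "pd i (\<lambda>y. \<Sum>l\<in>A. F l y) x = (\<Sum>l\<in>A. pd i (F l) x)"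
proof -
  have "((\<lambda>t. \<Sum>l\<in>A. F l (x + t *\<^sub>R axis i 1)) has_real_derivative (\<Sum>l\<in>A. pd i (F l) x)) (at 0)"
    by (rule DERIV_sum) (use assms pd_has_deriv in auto)
  then show ?thesis unfolding pd_def by (rule DERIV_imp_deriv)
qed

lemma clairaut_aux:
  fixes f :: "real^3 \<Rightarrow> real"
  assumes U: "open U" "x \<in> U" and df: "\<And>y. y \<in> U \<Longrightarrow> f differentiable (at y)"
    and dp: "pd j f differentiable (at x)" and eps: "\<epsilon> > 0"
  shows "\<exists>\<delta>>0. \<forall>h. 0 < h \<and> h < \<delta> \<longrightarrow>
    \<bar>f (x + h *\<^sub>R axis i 1 + h *\<^sub>R axis j 1) - f (x + h *\<^sub>R axis i 1) - f (x + h *\<^sub>R axis j 1) + f x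
      - h\<^sup>2 * pd i (pd j f) x\<bar> \<le> \<epsilon> * h\<^sup>2"
proof -
  define p where "p = pd j f"
  define D where "D = frechet_derivative p (at x)"
  define a :: "real^3" where "a = axis i 1"
  define b :: "real^3" where "b = axis j 1"
  have pD: "(p has_derivative D) (at x)" using dp frechet_derivative_works p_def D_def by blast
  have linD: "linear D" using has_derivative_linear[OF pD] .
  obtain d1 where d1: "d1 > 0" "\<And>y. norm (y - x) < d1 \<Longrightarrow> norm (p y - p x - D (y - x)) \<le> (\<epsilon>/3) * norm (y - x)"
    using pD eps unfolding has_derivative_at_alt by (meson divide_pos_pos zero_less_numeral)
  obtain e where e: "e > 0" "ball x e \<subseteq> U" using U openE by blast
  define \<delta> where "\<delta> = min d1 e / 2"
  have "\<delta> > 0" using d1 e by (simp add: \<delta>_def)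
  moreover have "\<bar>f (x + h *\<^sub>R a + h *\<^sub>R b) - f (x + h *\<^sub>R a) - f (x + h *\<^sub>R b) + f x
      - h\<^sup>2 * D a\<bar> \<le> \<epsilon> * h\<^sup>2" if h: "0 < h" "h < \<delta>" for h
  proof -
    define u where "u t = f (x + h *\<^sub>R a + t *\<^sub>R b) - f (x + t *\<^sub>R b)" for t
    have nab: "norm a = 1" "norm b = 1" by (simp_all add: a_def b_def)
    have der: "DERIV u t :> (p (x + h *\<^sub>R a + t *\<^sub>R b) - p (x + t *\<^sub>R b))" if t: "0 \<le> t" "t \<le> h" for t
    proof -
      have n1: "norm (h *\<^sub>R a + t *\<^sub>R b) \<le> h + t"
        using norm_triangle_ineq[of "h *\<^sub>R a" "t *\<^sub>R b"] nab h t by simp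
      have "dist x (x + h *\<^sub>R a + t *\<^sub>R b) = norm (h *\<^sub>R a + t *\<^sub>R b)"
        by (simp add: dist_norm add.assoc norm_minus_commute add.commute)
      then have in1: "x + h *\<^sub>R a + t *\<^sub>R b \<in> U"
        using e n1 h t unfolding \<delta>_def by (intro subsetD[OF e(2)]) auto
      have in2: "x + t *\<^sub>R b \<in> U"
        using e nab h t unfolding \<delta>_def by (auto simp: dist_norm intro!: subsetD[OF e(2)])
      have D1: "((\<lambda>t. f ((x + h *\<^sub>R a) + t *\<^sub>R b)) has_real_derivative p (x + h *\<^sub>R a + t *\<^sub>R b)) (at t)"
        using line_deriv[of f "x + h *\<^sub>R a" t b] df[OF in1] pd_eq_frechet[OF df[OF in1], of j]
        unfolding p_def b_def by simp
      have D2: "((\<lambda>t. f (x + t *\<^sub>R b)) has_real_derivative p (x + t *\<^sub>R b)) (at t)"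
        using line_deriv[of f x t b] df[OF in2] pd_eq_frechet[OF df[OF in2], of j]
        unfolding p_def b_def by simp
      show ?thesis unfolding u_def using DERIV_diff[OF D1 D2] by simp
    qed
    obtain z where z: "0 < z" "z < h"
      "u h - u 0 = (h - 0) * (p (x + h *\<^sub>R a + z *\<^sub>R b) - p (x + z *\<^sub>R b))"
      using MVT2[OF h(1), of u "\<lambda>t. p (x + h *\<^sub>R a + t *\<^sub>R b) - p (x + t *\<^sub>R b)"] der by blast
    have n1: "norm (h *\<^sub>R a + z *\<^sub>R b) \<le> 2 * h"
      using norm_triangle_ineq[of "h *\<^sub>R a" "z *\<^sub>R b"] nab h z by simp
    have b1: "norm (p (x + h *\<^sub>R a + z *\<^sub>R b) - p x - D (h *\<^sub>R a + z *\<^sub>R b)) \<le> (\<epsilon>/3) * (2*h)"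
    proof -
      have "norm ((x + h *\<^sub>R a + z *\<^sub>R b) - x) < d1" using n1 h unfolding \<delta>_def by auto
      from d1(2)[OF this] have "norm (p (x + h *\<^sub>R a + z *\<^sub>R b) - p x - D (h *\<^sub>R a + z *\<^sub>R b))
          \<le> (\<epsilon>/3) * norm (h *\<^sub>R a + z *\<^sub>R b)" by (simp add: add.assoc)
      also have "\<dots> \<le> (\<epsilon>/3) * (2*h)" using n1 eps by (intro mult_left_mono) auto
      finally show ?thesis .
    qed
    have b2: "norm (p (x + z *\<^sub>R b) - p x - D (z *\<^sub>R b)) \<le> (\<epsilon>/3) * h"
    proof -
      have "norm ((x + z *\<^sub>R b) - x) < d1" using nab h z unfolding \<delta>_def by auto
      from d1(2)[OF this] have "norm (p (x + z *\<^sub>R b) - p x - D (z *\<^sub>R b)) \<le> (\<epsilon>/3) * z"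
        using nab z by simp
      also have "\<dots> \<le> (\<epsilon>/3) * h" using z eps by (intro mult_left_mono) auto
      finally show ?thesis .
    qed
    have lin: "D (h *\<^sub>R a + z *\<^sub>R b) = h * D a + z * D b" "D (z *\<^sub>R b) = z * D b"
      using linD by (simp_all add: linear_add linear_cmul)
    define P where "P = p (x + h *\<^sub>R a + z *\<^sub>R b) - p (x + z *\<^sub>R b)"
    have "P - h * D a = (p (x + h *\<^sub>R a + z *\<^sub>R b) - p x - D (h *\<^sub>R a + z *\<^sub>R b))
        - (p (x + z *\<^sub>R b) - p x - D (z *\<^sub>R b))"
      unfolding P_def lin by simp
    then have "\<bar>P - h * D a\<bar> \<le> (\<epsilon>/3) * (2*h) + (\<epsilon>/3) * h"
      using b1 b2 abs_triangle_ineq4[of "p (x + h *\<^sub>R a + z *\<^sub>R b) - p x - D (h *\<^sub>R a + z *\<^sub>R b)"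
          "p (x + z *\<^sub>R b) - p x - D (z *\<^sub>R b)"]
      by (simp only: real_norm_def)
    then have Pb: "\<bar>P - h * D a\<bar> \<le> \<epsilon> * h" by simp
    have "h * P - h\<^sup>2 * D a = h * (P - h * D a)" by (simp add: power2_eq_square algebra_simps)
    then have "\<bar>h * P - h\<^sup>2 * D a\<bar> = h * \<bar>P - h * D a\<bar>" using h(1) by (simp add: abs_mult)
    also have "\<dots> \<le> h * (\<epsilon> * h)" using Pb h(1) by (intro mult_left_mono) auto
    finally have "\<bar>h * P - h\<^sup>2 * D a\<bar> \<le> \<epsilon> * h\<^sup>2" by (simp add: power2_eq_square mult_ac)
    moreover have "u h - u 0 = f (x + h *\<^sub>R a + h *\<^sub>R b) - f (x + h *\<^sub>R a) - f (x + h *\<^sub>R b) + f x"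
      unfolding u_def by simp
    ultimately show ?thesis using z(3) unfolding P_def by simp
  qed
  moreover have "pd i (pd j f) x = D a"
    using pd_eq_frechet[OF dp] unfolding D_def p_def a_def by simp
  ultimately show ?thesis unfolding a_def b_def by auto
qed


lemma clairaut:
  fixes f :: "real^3 \<Rightarrow> real"
  assumes U: "open U" "x \<in> U" and df: "\<And>y. y \<in> U \<Longrightarrow> f differentiable (at y)"
    and dpj: "pd j f differentiable (at x)" and dpi: "pd i f differentiable (at x)"
  shows "pd i (pd j f) x = pd j (pd i f) x"
proof (rule ccontr)
  let ?A = "pd i (pd j f) x" and ?B = "pd j (pd i f) x"
  assume ne: "?A \<noteq> ?B"
  define \<epsilon> where "\<epsilon> = \<bar>?A - ?B\<bar> / 3"
  have eps: "\<epsilon> > 0" using ne by (simp add: \<epsilon>_def)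
  obtain d1 where d1: "d1 > 0" "\<forall>h. 0 < h \<and> h < d1 \<longrightarrow>
    \<bar>f (x + h *\<^sub>R axis i 1 + h *\<^sub>R axis j 1) - f (x + h *\<^sub>R axis i 1) - f (x + h *\<^sub>R axis j 1) + f x
      - h\<^sup>2 * ?A\<bar> \<le> \<epsilon> * h\<^sup>2"
    using clairaut_aux[OF U df dpj eps, of i] by blast
  obtain d2 where d2: "d2 > 0" "\<forall>h. 0 < h \<and> h < d2 \<longrightarrow>
    \<bar>f (x + h *\<^sub>R axis j 1 + h *\<^sub>R axis i 1) - f (x + h *\<^sub>R axis j 1) - f (x + h *\<^sub>R axis i 1) + f x
      - h\<^sup>2 * ?B\<bar> \<le> \<epsilon> * h\<^sup>2"
    using clairaut_aux[OF U df dpi eps, of j] by blast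
  define h where "h = min d1 d2 / 2"
  have h: "0 < h" "h < d1" "h < d2" using d1 d2 by (auto simp: h_def)
  define \<phi> where "\<phi> = f (x + h *\<^sub>R axis i 1 + h *\<^sub>R axis j 1) - f (x + h *\<^sub>R axis i 1) - f (x + h *\<^sub>R axis j 1) + f x"
  have e1: "\<bar>\<phi> - h\<^sup>2 * ?A\<bar> \<le> \<epsilon> * h\<^sup>2" using d1(2) h unfolding \<phi>_def by blast
  have "x + h *\<^sub>R axis j 1 + h *\<^sub>R axis i 1 = x + h *\<^sub>R axis i 1 + h *\<^sub>R axis j 1" by (simp add: algebra_simps)
  moreover have "\<bar>f (x + h *\<^sub>R axis j 1 + h *\<^sub>R axis i 1) - f (x + h *\<^sub>R axis j 1) - f (x + h *\<^sub>R axis i 1) + f x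
      - h\<^sup>2 * ?B\<bar> \<le> \<epsilon> * h\<^sup>2" using d2(2) h by blast
  ultimately have e2: "\<bar>\<phi> - h\<^sup>2 * ?B\<bar> \<le> \<epsilon> * h\<^sup>2" unfolding \<phi>_def by (simp add: algebra_simps)
  have "\<bar>h\<^sup>2 * ?A - h\<^sup>2 * ?B\<bar> \<le> 2 * \<epsilon> * h\<^sup>2" using e1 e2 by linarith
  then have "h\<^sup>2 * \<bar>?A - ?B\<bar> \<le> h\<^sup>2 * (2 * \<epsilon>)"
    by (simp add: abs_mult right_diff_distrib[symmetric] mult_ac)
  then have "\<bar>?A - ?B\<bar> \<le> 2 * \<epsilon>" using h(1) by simp
  then show False using eps unfolding \<epsilon>_def by simp
qed

lemma diff_transform_open:
  assumes "f differentiable (at x)" "open S" "x \<in> S" "\<And>y. y \<in> S \<Longrightarrow> f y = h y"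
  shows "h differentiable (at x)"
  using assms has_derivative_transform_within_open unfolding differentiable_def by blast

lemma det_differentiable:
  fixes M :: "real^3 \<Rightarrow> real^3^3"
  assumes "\<And>i j. (\<lambda>y. M y $ i $ j) differentiable (at x)"
  shows "(\<lambda>y. det (M y)) differentiable (at x)"
proof -
  have pr: "(\<lambda>y. \<Prod>i\<in>UNIV. M y $ i $ p i) differentiable (at x)" for p :: "3 \<Rightarrow> 3"
  proof -
    obtain D where "\<And>i j. ((\<lambda>y. M y $ i $ j) has_derivative D i j) (at x)"
      using assms unfolding differentiable_def by metis
    then show ?thesis unfolding differentiable_def
      using has_derivative_prod[of UNIV "\<lambda>i y. M y $ i $ p i" "\<lambda>i. D i (p i)" x UNIV] by blast
  qed
  show ?thesis unfolding det_def
    by (intro differentiable_sum differentiable_mult differentiable_const pr ballI)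
      (simp add: finite_permutations)
qed

context
  fixes U g
  assumes rm: "riemannian_metric U g"
begin

lemma rm_open: "open U" using rm by (simp add: riemannian_metric_def)

lemma g_sym: "x \<in> U \<Longrightarrow> g x $ a $ b = g x $ b $ a"
proof -
  assume "x \<in> U"
  then have "transpose (g x) $ b $ a = g x $ b $ a" using rm unfolding riemannian_metric_def by simp
  then show ?thesis by (simp add: transpose_def)
qed

lemma iter_diff: "x \<in> U \<Longrightarrow> iter_pd is (\<lambda>y. g y $ a $ b) differentiable (at x)"
  using rm unfolding riemannian_metric_def smooth_on_R3_def by blast

lemma g_diff: "x \<in> U \<Longrightarrow> (\<lambda>y. g y $ a $ b) differentiable (at x)"
  using iter_diff[of x "[]"] by simp

lemma pdg_diff: "x \<in> U \<Longrightarrow> pd c (\<lambda>y. g y $ a $ b) differentiable (at x)"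
  using iter_diff[of x "[c]"] by simp

lemma pdpdg_diff: "x \<in> U \<Longrightarrow> pd d (pd c (\<lambda>y. g y $ a $ b)) differentiable (at x)"
  using iter_diff[of x "[d,c]"] by simp

lemma g_clairaut: "x \<in> U \<Longrightarrow> pd i (pd j (\<lambda>y. g y $ a $ b)) x = pd j (pd i (\<lambda>y. g y $ a $ b)) x"
  by (rule clairaut[OF rm_open _ g_diff pdg_diff pdg_diff])

lemma g_inj: "x \<in> U \<Longrightarrow> inj ((*v) (g x))"
proof (rule injI)
  fix v w assume x: "x \<in> U" and e: "g x *v v = g x *v w"
  have "g x *v (v - w) = 0" using e by (simp add: matrix_vector_mult_diff_distrib)
  then have "(v - w) \<bullet> (g x *v (v - w)) = 0" by simp
  then show "v = w" using rm x unfolding riemannian_metric_def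
    by (metis less_irrefl right_minus_eq)
qed

lemma g_det: "x \<in> U \<Longrightarrow> det (g x) \<noteq> 0"
  using det_nz_iff_inj[of "(*v) (g x)"] g_inj by simp

lemma g_inv: "x \<in> U \<Longrightarrow> g x ** matrix_inv (g x) = mat 1 \<and> matrix_inv (g x) ** g x = mat 1"
proof -
  assume x: "x \<in> U"
  then have "invertible (g x)" using g_det invertible_det_nz by blast
  then show ?thesis unfolding invertible_def matrix_inv_def by (rule someI_ex)
qed

lemma ginv_entry:
  assumes x: "x \<in> U"
  shows "matrix_inv (g x) $ k $ p = det (\<chi> i j. if j = k then axis p 1 $ i else g x $ i $ j) / det (g x)"
proof -
  let ?H = "matrix_inv (g x)"
  have "g x *v (?H *v axis p 1) = axis p 1"
    using g_inv[OF x] by (simp add: matrix_vector_mul_assoc)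
  then have "?H *v axis p 1 = (\<chi> k. det (\<chi> i j. if j = k then axis p 1 $ i else g x $ i $ j) / det (g x))"
    using cramer[OF g_det[OF x]] by blast
  moreover have "(?H *v axis p 1) $ k = ?H $ k $ p"
    by (simp add: matrix_vector_mult_def axis_def if_distrib cong: if_cong)
  ultimately show ?thesis by simp
qed

lemma ginv_diff: "x \<in> U \<Longrightarrow> (\<lambda>y. matrix_inv (g y) $ k $ p) differentiable (at x)"
proof -
  assume x: "x \<in> U"
  define M where "M y = (\<chi> i j. if j = k then axis p 1 $ i else g y $ i $ j)" for y
  have ent: "(\<lambda>y. M y $ a $ b) differentiable (at x)" for a b :: 3
  proof (cases "b = k")
    case True
    then show ?thesis unfolding M_def by simp
  next
    case False
    then show ?thesis unfolding M_def using g_diff[OF x, of a b] by simp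
  qed
  have d1: "(\<lambda>y. det (M y)) differentiable (at x)" by (rule det_differentiable[OF ent])
  have d2: "(\<lambda>y. det (g y)) differentiable (at x)" by (rule det_differentiable[OF g_diff[OF x]])
  have "(\<lambda>y. det (M y) / det (g y)) differentiable (at x)"
    by (rule differentiable_divide[OF d1 d2 g_det[OF x]])
  moreover have "\<And>y. y \<in> U \<Longrightarrow> det (M y) / det (g y) = matrix_inv (g y) $ k $ p"
    unfolding M_def by (rule ginv_entry[symmetric])
  ultimately show ?thesis
    by (rule diff_transform_open[OF _ rm_open x])
qed

lemma ginv_sym: "x \<in> U \<Longrightarrow> matrix_inv (g x) $ a $ b = matrix_inv (g x) $ b $ a"
proof -
  assume x: "x \<in> U"
  have gt: "transpose (g x) = g x" using rm x unfolding riemannian_metric_def by blast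
  let ?H = "matrix_inv (g x)"
  have "transpose ?H ** g x = transpose (g x ** ?H)"
    by (simp add: matrix_transpose_mul gt)
  also have "\<dots> = mat 1" using g_inv[OF x] by (simp add: transpose_mat)
  finally have 1: "transpose ?H ** g x = mat 1" .
  have "transpose ?H = transpose ?H ** (g x ** ?H)" using g_inv[OF x] by simp
  also have "\<dots> = (transpose ?H ** g x) ** ?H" by (simp add: matrix_mul_assoc)
  also have "\<dots> = ?H" using 1 by simp
  finally have "transpose ?H = ?H" .
  then have "transpose ?H $ b $ a = ?H $ b $ a" by simp
  then show ?thesis by (simp add: transpose_def)
qed

end

lemma curv_alg:
  fixes G H :: "'n::finite \<Rightarrow> 'n \<Rightarrow> real" and dG dH C \<Gamma> :: "'n \<Rightarrow> 'n \<Rightarrow> 'n \<Rightarrow> real"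
    and dd dC d\<Gamma> Rc :: "'n \<Rightarrow> 'n \<Rightarrow> 'n \<Rightarrow> 'n \<Rightarrow> real"
  assumes GH: "\<And>m p. (\<Sum>l\<in>UNIV. G m l * H l p) = (if m = p then 1 else 0)"
    and Hsym: "\<And>a b. H a b = H b a"
    and dGsym: "\<And>i a b. dG i a b = dG i b a"
    and dHrel: "\<And>i m p. (\<Sum>l\<in>UNIV. dG i m l * H l p + G m l * dH i l p) = 0"
    and ddsym: "\<And>i a b p. dd i a b p = dd i a p b"
    and clair: "\<And>i j b p. dd i j b p = dd j i b p"
    and C_def: "\<And>p a b. C p a b = (dG a b p + dG b a p - dG p a b) / 2"
    and \<Gamma>_def: "\<And>l a b. \<Gamma> l a b = (\<Sum>p\<in>UNIV. H l p * C p a b)"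
    and dC_def: "\<And>i p a b. dC i p a b = (dd i a b p + dd i b a p - dd i p a b) / 2"
    and d\<Gamma>_def: "\<And>i l a b. d\<Gamma> i l a b = (\<Sum>p\<in>UNIV. dH i l p * C p a b + H l p * dC i p a b)"
    and R_def: "\<And>l i j k. Rc l i j k = d\<Gamma> i l j k - d\<Gamma> j l i k
        + (\<Sum>q\<in>UNIV. \<Gamma> l i q * \<Gamma> q j k - \<Gamma> l j q * \<Gamma> q i k)"
  shows "(\<Sum>l\<in>UNIV. G m l * Rc l i j k) + (\<Sum>l\<in>UNIV. G k l * Rc l i j m) = 0"
proof -
  have delta: "(\<Sum>p\<in>UNIV. (\<Sum>l\<in>UNIV. G m l * H l p) * F p) = F m" for m and F :: "'n \<Rightarrow> real"
  proof -
    have "(\<Sum>p\<in>UNIV. (\<Sum>l\<in>UNIV. G m l * H l p) * F p) = (\<Sum>p\<in>UNIV. if m = p then F p else 0)"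
      by (rule sum.cong) (auto simp: GH)
    then show ?thesis by simp
  qed
  have GX: "(\<Sum>l\<in>UNIV. G m l * (\<Sum>p\<in>UNIV. H l p * F p)) = F m" for m and F :: "'n \<Rightarrow> real"
  proof -
    have "(\<Sum>l\<in>UNIV. G m l * (\<Sum>p\<in>UNIV. H l p * F p)) = (\<Sum>l\<in>UNIV. \<Sum>p\<in>UNIV. G m l * H l p * F p)"
      by (simp add: sum_distrib_left mult.assoc)
    also have "\<dots> = (\<Sum>p\<in>UNIV. \<Sum>l\<in>UNIV. G m l * H l p * F p)" by (rule sum.swap)
    also have "\<dots> = (\<Sum>p\<in>UNIV. (\<Sum>l\<in>UNIV. G m l * H l p) * F p)" by (simp add: sum_distrib_right)
    also have "\<dots> = F m" by (rule delta)
    finally show ?thesis .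
  qed
  have a: "(\<Sum>l\<in>UNIV. G m l * \<Gamma> l a b) = C m a b" for m a b
    unfolding \<Gamma>_def by (rule GX)
  have GdH: "(\<Sum>l\<in>UNIV. G m l * dH i l p) = - (\<Sum>l\<in>UNIV. dG i m l * H l p)" for i m p
    using dHrel[of i m p] by (simp add: sum.distrib eq_neg_iff_add_eq_0 add.commute)
  have b: "(\<Sum>l\<in>UNIV. G m l * d\<Gamma> i l a b) = - (\<Sum>q\<in>UNIV. dG i m q * \<Gamma> q a b) + dC i m a b" for i m a b
  proof -
    have "(\<Sum>l\<in>UNIV. G m l * d\<Gamma> i l a b) =
        (\<Sum>l\<in>UNIV. \<Sum>p\<in>UNIV. G m l * dH i l p * C p a b) + (\<Sum>l\<in>UNIV. G m l * (\<Sum>p\<in>UNIV. H l p * dC i p a b))"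
      by (simp add: d\<Gamma>_def sum_distrib_left sum.distrib distrib_left mult.assoc)
    also have "(\<Sum>l\<in>UNIV. G m l * (\<Sum>p\<in>UNIV. H l p * dC i p a b)) = dC i m a b" by (rule GX)
    also have "(\<Sum>l\<in>UNIV. \<Sum>p\<in>UNIV. G m l * dH i l p * C p a b) = (\<Sum>p\<in>UNIV. (\<Sum>l\<in>UNIV. G m l * dH i l p) * C p a b)"
      by (subst sum.swap) (simp add: sum_distrib_right)
    also have "\<dots> = - (\<Sum>p\<in>UNIV. (\<Sum>l\<in>UNIV. dG i m l * H l p) * C p a b)"
      by (simp add: GdH sum_negf)
    also have "(\<Sum>p\<in>UNIV. (\<Sum>l\<in>UNIV. dG i m l * H l p) * C p a b) = (\<Sum>l\<in>UNIV. dG i m l * \<Gamma> l a b)"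
      unfolding \<Gamma>_def sum_distrib_right sum_distrib_left by (subst sum.swap) (simp add: mult.assoc)
    finally show ?thesis by simp
  qed
  have c: "(\<Sum>l\<in>UNIV. G m l * (\<Sum>q\<in>UNIV. \<Gamma> l i q * \<Gamma> q j k)) = (\<Sum>q\<in>UNIV. C m i q * \<Gamma> q j k)" for m i j k
  proof -
    have "(\<Sum>l\<in>UNIV. G m l * (\<Sum>q\<in>UNIV. \<Gamma> l i q * \<Gamma> q j k)) = (\<Sum>q\<in>UNIV. (\<Sum>l\<in>UNIV. G m l * \<Gamma> l i q) * \<Gamma> q j k)"
      unfolding sum_distrib_left sum_distrib_right by (subst sum.swap) (simp add: mult.assoc)
    then show ?thesis by (simp add: a)
  qed
  have d: "dG i m q = C q i m + C m i q" for i m q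
    unfolding C_def using dGsym[of i m q] dGsym[of m i q] dGsym[of q i m] by (simp add: field_simps)
  have e: "(\<Sum>l\<in>UNIV. G m l * Rc l i j k) = dC i m j k - dC j m i k
      - (\<Sum>q\<in>UNIV. C q i m * \<Gamma> q j k) + (\<Sum>q\<in>UNIV. C q j m * \<Gamma> q i k)" for m i j k
  proof -
    have "(\<Sum>l\<in>UNIV. G m l * Rc l i j k) = (\<Sum>l\<in>UNIV. G m l * d\<Gamma> i l j k) - (\<Sum>l\<in>UNIV. G m l * d\<Gamma> j l i k)
       + (\<Sum>l\<in>UNIV. G m l * (\<Sum>q\<in>UNIV. \<Gamma> l i q * \<Gamma> q j k)) - (\<Sum>l\<in>UNIV. G m l * (\<Sum>q\<in>UNIV. \<Gamma> l j q * \<Gamma> q i k))"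
      by (simp add: R_def sum.distrib sum_subtractf right_diff_distrib distrib_left)
    also have "\<dots> = (- (\<Sum>q\<in>UNIV. dG i m q * \<Gamma> q j k) + dC i m j k) - (- (\<Sum>q\<in>UNIV. dG j m q * \<Gamma> q i k) + dC j m i k)
       + (\<Sum>q\<in>UNIV. C m i q * \<Gamma> q j k) - (\<Sum>q\<in>UNIV. C m j q * \<Gamma> q i k)"
      by (simp only: b c)
    also have "(\<Sum>q\<in>UNIV. dG i m q * \<Gamma> q j k) = (\<Sum>q\<in>UNIV. C q i m * \<Gamma> q j k) + (\<Sum>q\<in>UNIV. C m i q * \<Gamma> q j k)"
      by (simp add: d distrib_right sum.distrib)
    also have "(\<Sum>q\<in>UNIV. dG j m q * \<Gamma> q i k) = (\<Sum>q\<in>UNIV. C q j m * \<Gamma> q i k) + (\<Sum>q\<in>UNIV. C m j q * \<Gamma> q i k)"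
      by (simp add: d distrib_right sum.distrib)
    finally show ?thesis by simp
  qed
  have f: "(\<Sum>q\<in>UNIV. C q a b * \<Gamma> q c d) = (\<Sum>q\<in>UNIV. C q c d * \<Gamma> q a b)" for a b c d
  proof -
    have "(\<Sum>q\<in>UNIV. C q a b * \<Gamma> q c d) = (\<Sum>q\<in>UNIV. \<Sum>p\<in>UNIV. C q a b * H q p * C p c d)"
      by (simp add: \<Gamma>_def sum_distrib_left mult.assoc)
    also have "\<dots> = (\<Sum>p\<in>UNIV. \<Sum>q\<in>UNIV. C q a b * H q p * C p c d)" by (rule sum.swap)
    also have "\<dots> = (\<Sum>p\<in>UNIV. \<Sum>q\<in>UNIV. C p c d * H p q * C q a b)"
      by (simp add: Hsym mult_ac)
    also have "\<dots> = (\<Sum>q\<in>UNIV. C q c d * \<Gamma> q a b)"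
      by (simp add: \<Gamma>_def sum_distrib_left mult.assoc)
    finally show ?thesis .
  qed
  have g: "dC i m j k + dC i k j m = dd i j k m" for i m j k
    unfolding dC_def using ddsym[of i j k m] ddsym[of i k j m] ddsym[of i m j k] by (simp add: field_simps)
  show ?thesis
    unfolding e
    using f[of i m j k] f[of j m i k] g[of i m j k] g[of j m i k] clair[of i j k m]
    by simp
qed

lemma pd_divc:
  fixes f :: "real^3 \<Rightarrow> real"
  assumes "f differentiable (at x)"
  shows "pd i (\<lambda>y. f y / c) x = pd i f x / c"
  unfolding pd_def
  by (rule DERIV_imp_deriv, rule DERIV_cdivide[OF pd_has_deriv[OF assms], unfolded pd_def])

lemma christoffel_expand:
  "christoffel g y l a b = (\<Sum>p\<in>UNIV. matrix_inv (g y) $ l $ p *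
     ((pd a (\<lambda>z. g z $ b $ p) y + pd b (\<lambda>z. g z $ a $ p) y - pd p (\<lambda>z. g z $ a $ b) y) / 2))"
  unfolding christoffel_def by (simp add: sum_distrib_left mult_ac)

lemma swap4:
  fixes F :: "'a \<Rightarrow> 'b \<Rightarrow> 'c \<Rightarrow> 'd \<Rightarrow> real"
  shows "(\<Sum>l\<in>A. \<Sum>i\<in>B. \<Sum>j\<in>C. \<Sum>k\<in>D. F l i j k) = (\<Sum>i\<in>B. \<Sum>j\<in>C. \<Sum>k\<in>D. \<Sum>l\<in>A. F l i j k)"
proof -
  have 1: "(\<Sum>l\<in>A. \<Sum>i\<in>B. \<Sum>j\<in>C. \<Sum>k\<in>D. F l i j k) = (\<Sum>i\<in>B. \<Sum>l\<in>A. \<Sum>j\<in>C. \<Sum>k\<in>D. F l i j k)"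
    by (rule sum.swap)
  have 2: "\<And>i. (\<Sum>l\<in>A. \<Sum>j\<in>C. \<Sum>k\<in>D. F l i j k) = (\<Sum>j\<in>C. \<Sum>l\<in>A. \<Sum>k\<in>D. F l i j k)"
    by (rule sum.swap)
  have 3: "\<And>i j. (\<Sum>l\<in>A. \<Sum>k\<in>D. F l i j k) = (\<Sum>k\<in>D. \<Sum>l\<in>A. F l i j k)"
    by (rule sum.swap)
  show ?thesis by (simp only: 1 2 3)
qed

lemma skew_zero:
  fixes S :: "'a \<Rightarrow> 'a \<Rightarrow> real"
  assumes "\<And>m k. S m k + S k m = 0"
  shows "(\<Sum>k\<in>A. \<Sum>m\<in>A. z k * z m * S m k) = 0"
proof -
  let ?T = "(\<Sum>k\<in>A. \<Sum>m\<in>A. z k * z m * S m k)"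
  have "(\<Sum>k\<in>A. \<Sum>m\<in>A. z k * z m * S k m) = (\<Sum>m\<in>A. \<Sum>k\<in>A. z k * z m * S k m)"
    by (rule sum.swap)
  also have "\<dots> = ?T" by (simp add: mult_ac)
  finally have e: "(\<Sum>k\<in>A. \<Sum>m\<in>A. z k * z m * S k m) = ?T" .
  have "?T + (\<Sum>k\<in>A. \<Sum>m\<in>A. z k * z m * S k m) = (\<Sum>k\<in>A. \<Sum>m\<in>A. z k * z m * (S m k + S k m))"
    by (simp add: sum.distrib distrib_left)
  also have "\<dots> = 0" using assms by simp
  finally show ?thesis using e by simp
qed

context
  fixes U g x
  assumes rm: "riemannian_metric U g" and xU: "x \<in> U"
begin

lemma bracket_diff:
  "(\<lambda>y. (pd a (\<lambda>z. g z $ b $ p) y + pd b (\<lambda>z. g z $ a $ p) y - pd p (\<lambda>z. g z $ a $ b) y) / 2)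
     differentiable (at x)"
  using pdg_diff[OF rm xU] by (intro differentiable_divide differentiable_add differentiable_diff) auto

lemma pd_bracket:
  "pd i (\<lambda>y. (pd a (\<lambda>z. g z $ b $ p) y + pd b (\<lambda>z. g z $ a $ p) y - pd p (\<lambda>z. g z $ a $ b) y) / 2) x
   = (pd i (pd a (\<lambda>z. g z $ b $ p)) x + pd i (pd b (\<lambda>z. g z $ a $ p)) x - pd i (pd p (\<lambda>z. g z $ a $ b)) x) / 2"
proof -
  have d: "pd c (\<lambda>z. g z $ e $ f) differentiable (at x)" for c e f using pdg_diff[OF rm xU] .
  have d2: "(\<lambda>y. pd a (\<lambda>z. g z $ b $ p) y + pd b (\<lambda>z. g z $ a $ p) y - pd p (\<lambda>z. g z $ a $ b) y) differentiable (at x)"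
    using d by (intro differentiable_add differentiable_diff) auto
  have d1: "(\<lambda>y. pd a (\<lambda>z. g z $ b $ p) y + pd b (\<lambda>z. g z $ a $ p) y) differentiable (at x)"
    using d by (intro differentiable_add) auto
  show ?thesis
    unfolding pd_divc[OF d2] pd_diff[OF d1 d] pd_add[OF d d] ..
qed

lemma pd_christoffel:
  "pd i (\<lambda>y. christoffel g y l a b) x =
    (\<Sum>p\<in>UNIV. pd i (\<lambda>y. matrix_inv (g y) $ l $ p) x *
        ((pd a (\<lambda>z. g z $ b $ p) x + pd b (\<lambda>z. g z $ a $ p) x - pd p (\<lambda>z. g z $ a $ b) x) / 2)
      + matrix_inv (g x) $ l $ p *
        ((pd i (pd a (\<lambda>z. g z $ b $ p)) x + pd i (pd b (\<lambda>z. g z $ a $ p)) x - pd i (pd p (\<lambda>z. g z $ a $ b)) x) / 2))"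
proof -
  have "pd i (\<lambda>y. christoffel g y l a b) x = pd i (\<lambda>y. \<Sum>p\<in>UNIV. matrix_inv (g y) $ l $ p *
     ((pd a (\<lambda>z. g z $ b $ p) y + pd b (\<lambda>z. g z $ a $ p) y - pd p (\<lambda>z. g z $ a $ b) y) / 2)) x"
    by (simp only: christoffel_expand)
  also have "\<dots> = (\<Sum>p\<in>UNIV. pd i (\<lambda>y. matrix_inv (g y) $ l $ p *
     ((pd a (\<lambda>z. g z $ b $ p) y + pd b (\<lambda>z. g z $ a $ p) y - pd p (\<lambda>z. g z $ a $ b) y) / 2)) x)"
    by (rule pd_sum[OF finite_class.finite_UNIV], rule differentiable_mult[OF ginv_diff[OF rm xU] bracket_diff])
  also have "\<dots> = (\<Sum>p\<in>UNIV. pd i (\<lambda>y. matrix_inv (g y) $ l $ p) x *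
        ((pd a (\<lambda>z. g z $ b $ p) x + pd b (\<lambda>z. g z $ a $ p) x - pd p (\<lambda>z. g z $ a $ b) x) / 2)
      + matrix_inv (g x) $ l $ p *
        pd i (\<lambda>y. (pd a (\<lambda>z. g z $ b $ p) y + pd b (\<lambda>z. g z $ a $ p) y - pd p (\<lambda>z. g z $ a $ b) y) / 2) x)"
    by (rule sum.cong[OF refl], rule pd_mult[OF ginv_diff[OF rm xU] bracket_diff])
  finally show ?thesis by (simp only: pd_bracket)
qed

lemma GH_entry: "y \<in> U \<Longrightarrow> (\<Sum>l\<in>UNIV. g y $ m $ l * matrix_inv (g y) $ l $ p) = (if m = p then 1 else 0)"
proof -
  assume y: "y \<in> U"
  have "(g y ** matrix_inv (g y)) $ m $ p = mat 1 $ m $ p" using g_inv[OF rm y] by simp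
  then show ?thesis by (simp add: matrix_matrix_mult_def mat_def)
qed

lemma dH_rel: "(\<Sum>l\<in>UNIV. pd i (\<lambda>y. g y $ m $ l) x * matrix_inv (g x) $ l $ p
     + g x $ m $ l * pd i (\<lambda>y. matrix_inv (g y) $ l $ p) x) = 0"
proof -
  have "pd i (\<lambda>y. \<Sum>l\<in>UNIV. g y $ m $ l * matrix_inv (g y) $ l $ p) x = pd i (\<lambda>y. if m = p then 1 else 0) x"
    by (rule pd_local[OF rm_open[OF rm] xU]) (rule GH_entry)
  also have "\<dots> = 0" by (rule pd_const)
  finally have "pd i (\<lambda>y. \<Sum>l\<in>UNIV. g y $ m $ l * matrix_inv (g y) $ l $ p) x = 0" .
  moreover have "pd i (\<lambda>y. \<Sum>l\<in>UNIV. g y $ m $ l * matrix_inv (g y) $ l $ p) x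
     = (\<Sum>l\<in>UNIV. pd i (\<lambda>y. g y $ m $ l * matrix_inv (g y) $ l $ p) x)"
    by (rule pd_sum[OF finite_class.finite_UNIV], rule differentiable_mult[OF g_diff[OF rm xU] ginv_diff[OF rm xU]])
  moreover have "\<And>l. pd i (\<lambda>y. g y $ m $ l * matrix_inv (g y) $ l $ p) x =
      pd i (\<lambda>y. g y $ m $ l) x * matrix_inv (g x) $ l $ p + g x $ m $ l * pd i (\<lambda>y. matrix_inv (g y) $ l $ p) x"
    by (rule pd_mult[OF g_diff[OF rm xU] ginv_diff[OF rm xU]])
  ultimately show ?thesis by simp
qed

lemma dG_sym: "pd i (\<lambda>y. g y $ a $ b) x = pd i (\<lambda>y. g y $ b $ a) x"
  by (rule pd_local[OF rm_open[OF rm] xU]) (rule g_sym[OF rm])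

lemma dd_sym: "pd i (pd a (\<lambda>y. g y $ b $ p)) x = pd i (pd a (\<lambda>y. g y $ p $ b)) x"
  by (rule pd_local[OF rm_open[OF rm] xU], rule pd_local[OF rm_open[OF rm]]) (auto intro: g_sym[OF rm])

lemma S_antisym:
  "(\<Sum>l\<in>UNIV. g x $ m $ l * riem_coeff g x l i j k) + (\<Sum>l\<in>UNIV. g x $ k $ l * riem_coeff g x l i j m) = 0"
proof (rule curv_alg[where G="\<lambda>a b. g x $ a $ b" and H="\<lambda>a b. matrix_inv (g x) $ a $ b"
    and dG="\<lambda>i a b. pd i (\<lambda>y. g y $ a $ b) x" and dH="\<lambda>i a b. pd i (\<lambda>y. matrix_inv (g y) $ a $ b) x"
    and dd="\<lambda>i a b p. pd i (pd a (\<lambda>y. g y $ b $ p)) x"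
    and C="\<lambda>p a b. (pd a (\<lambda>z. g z $ b $ p) x + pd b (\<lambda>z. g z $ a $ p) x - pd p (\<lambda>z. g z $ a $ b) x) / 2"
    and \<Gamma>="\<lambda>l a b. christoffel g x l a b"
    and dC="\<lambda>i p a b. (pd i (pd a (\<lambda>z. g z $ b $ p)) x + pd i (pd b (\<lambda>z. g z $ a $ p)) x - pd i (pd p (\<lambda>z. g z $ a $ b)) x) / 2"
    and d\<Gamma>="\<lambda>i l a b. pd i (\<lambda>y. christoffel g y l a b) x"])
  show "\<And>m p. (\<Sum>l\<in>UNIV. g x $ m $ l * matrix_inv (g x) $ l $ p) = (if m = p then 1 else 0)"
    by (rule GH_entry[OF xU])
  show "\<And>a b. matrix_inv (g x) $ a $ b = matrix_inv (g x) $ b $ a" by (rule ginv_sym[OF rm xU])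
  show "\<And>i a b. pd i (\<lambda>y. g y $ a $ b) x = pd i (\<lambda>y. g y $ b $ a) x" by (rule dG_sym)
  show "\<And>i m p. (\<Sum>l\<in>UNIV. pd i (\<lambda>y. g y $ m $ l) x * matrix_inv (g x) $ l $ p
     + g x $ m $ l * pd i (\<lambda>y. matrix_inv (g y) $ l $ p) x) = 0" by (rule dH_rel)
  show "\<And>i a b p. pd i (pd a (\<lambda>y. g y $ b $ p)) x = pd i (pd a (\<lambda>y. g y $ p $ b)) x" by (rule dd_sym)
  show "\<And>i j b p. pd i (pd j (\<lambda>y. g y $ b $ p)) x = pd j (pd i (\<lambda>y. g y $ b $ p)) x"
    by (rule g_clairaut[OF rm xU])
  show "\<And>l a b. christoffel g x l a b = (\<Sum>p\<in>UNIV. matrix_inv (g x) $ l $ p *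
     ((pd a (\<lambda>z. g z $ b $ p) x + pd b (\<lambda>z. g z $ a $ p) x - pd p (\<lambda>z. g z $ a $ b) x) / 2))"
    by (rule christoffel_expand)
  show "\<And>i l a b. pd i (\<lambda>y. christoffel g y l a b) x = (\<Sum>p\<in>UNIV. pd i (\<lambda>y. matrix_inv (g y) $ l $ p) x *
        ((pd a (\<lambda>z. g z $ b $ p) x + pd b (\<lambda>z. g z $ a $ p) x - pd p (\<lambda>z. g z $ a $ b) x) / 2)
      + matrix_inv (g x) $ l $ p *
        ((pd i (pd a (\<lambda>z. g z $ b $ p)) x + pd i (pd b (\<lambda>z. g z $ a $ p)) x - pd i (pd p (\<lambda>z. g z $ a $ b)) x) / 2))"
    by (rule pd_christoffel)
  show "\<And>l i j k. riem_coeff g x l i j k = pd i (\<lambda>y. christoffel g y l j k) x - pd j (\<lambda>y. christoffel g y l i k) x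
        + (\<Sum>q\<in>UNIV. christoffel g x l i q * christoffel g x q j k - christoffel g x l j q * christoffel g x q i k)"
    by (rule riem_coeff_def)
qed simp_all

lemma curv_ginner_zero: "ginner g x (curvR g x X Y Z) Z = 0"
proof -
  define G where "G a b = g x $ a $ b" for a b
  define Rc where "Rc = riem_coeff g x"
  define S where "S m i j k = (\<Sum>l\<in>UNIV. G m l * Rc l i j k)" for m i j k
  define R where "R l = (\<Sum>i\<in>UNIV. \<Sum>j\<in>UNIV. \<Sum>k\<in>UNIV. Rc l i j k * X $ i * Y $ j * Z $ k)" for l
  have Gs: "G a b = G b a" for a b unfolding G_def by (rule g_sym[OF rm xU])
  have Sa: "S m i j k + S k i j m = 0" for m i j k
    unfolding S_def G_def Rc_def by (rule S_antisym)
  have "ginner g x (curvR g x X Y Z) Z = (\<Sum>l\<in>UNIV. R l * (\<Sum>m\<in>UNIV. G l m * Z $ m))"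
    unfolding ginner_def curvR_def inner_vec_def matrix_vector_mult_def R_def G_def Rc_def by simp
  also have "\<dots> = (\<Sum>l\<in>UNIV. \<Sum>m\<in>UNIV. R l * G l m * Z $ m)"
    by (simp add: sum_distrib_left mult.assoc)
  also have "\<dots> = (\<Sum>m\<in>UNIV. \<Sum>l\<in>UNIV. R l * G l m * Z $ m)" by (rule sum.swap)
  also have "\<dots> = (\<Sum>m\<in>UNIV. Z $ m * (\<Sum>l\<in>UNIV. G m l * R l))"
    by (simp add: sum_distrib_left Gs mult_ac)
  also have "\<dots> = (\<Sum>m\<in>UNIV. Z $ m * (\<Sum>i\<in>UNIV. \<Sum>j\<in>UNIV. \<Sum>k\<in>UNIV. X $ i * Y $ j * Z $ k * S m i j k))"
  proof (rule sum.cong[OF refl])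
    fix m
    have "(\<Sum>l\<in>UNIV. G m l * R l) = (\<Sum>l\<in>UNIV. \<Sum>i\<in>UNIV. \<Sum>j\<in>UNIV. \<Sum>k\<in>UNIV. G m l * (Rc l i j k * X $ i * Y $ j * Z $ k))"
      unfolding R_def by (simp add: sum_distrib_left)
    also have "\<dots> = (\<Sum>i\<in>UNIV. \<Sum>j\<in>UNIV. \<Sum>k\<in>UNIV. \<Sum>l\<in>UNIV. G m l * (Rc l i j k * X $ i * Y $ j * Z $ k))"
      by (rule swap4)
    also have "\<dots> = (\<Sum>i\<in>UNIV. \<Sum>j\<in>UNIV. \<Sum>k\<in>UNIV. X $ i * Y $ j * Z $ k * S m i j k)"
      unfolding S_def by (simp add: sum_distrib_left mult_ac)
    finally show "Z $ m * (\<Sum>l\<in>UNIV. G m l * R l) = Z $ m * (\<Sum>i\<in>UNIV. \<Sum>j\<in>UNIV. \<Sum>k\<in>UNIV. X $ i * Y $ j * Z $ k * S m i j k)"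
      by simp
  qed
  also have "\<dots> = (\<Sum>m\<in>UNIV. \<Sum>i\<in>UNIV. \<Sum>j\<in>UNIV. \<Sum>k\<in>UNIV. X $ i * Y $ j * (Z $ k * Z $ m * S m i j k))"
    by (simp add: sum_distrib_left mult_ac)
  also have "\<dots> = (\<Sum>i\<in>UNIV. \<Sum>j\<in>UNIV. \<Sum>k\<in>UNIV. \<Sum>m\<in>UNIV. X $ i * Y $ j * (Z $ k * Z $ m * S m i j k))"
    by (rule swap4)
  also have "\<dots> = (\<Sum>i\<in>UNIV. \<Sum>j\<in>UNIV. X $ i * Y $ j * (\<Sum>k\<in>UNIV. \<Sum>m\<in>UNIV. Z $ k * Z $ m * S m i j k))"
    by (simp add: sum_distrib_left)
  also have "\<dots> = 0"
  proof -
    have "(\<Sum>k\<in>UNIV. \<Sum>m\<in>UNIV. Z $ k * Z $ m * S m i j k) = 0" for i j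
      by (rule skew_zero) (rule Sa)
    then show ?thesis by simp
  qed
  finally show ?thesis .
qed

end

lemma covD_local:
  assumes "open I" "s \<in> I" "\<And>t. t \<in> I \<Longrightarrow> V t = W t"
  shows "covD g \<gamma> V s = covD g \<gamma> W s"
proof -
  have ev: "eventually (\<lambda>t. V t $ k = W t $ k) (nhds s)" for k
    using assms eventually_nhds_in_open[OF assms(1,2)] by (auto elim!: eventually_mono)
  have "deriv (\<lambda>t. V t $ k) s = deriv (\<lambda>t. W t $ k) s" for k
    by (rule deriv_cong_ev[OF ev refl])
  then show ?thesis unfolding covD_def using assms(2,3) by simp
qed

lemma covD_comb:
  fixes T N B :: "real \<Rightarrow> real^3"
  assumes da: "(a has_real_derivative a') (at s)" and db: "(b has_real_derivative b') (at s)"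
    and dc: "(c has_real_derivative c') (at s)"
    and dT: "\<And>k. (\<lambda>t. T t $ k) differentiable (at s)"
    and dN: "\<And>k. (\<lambda>t. N t $ k) differentiable (at s)"
    and dB: "\<And>k. (\<lambda>t. B t $ k) differentiable (at s)"
  shows "covD g \<gamma> (\<lambda>t. a t *\<^sub>R T t + b t *\<^sub>R N t + c t *\<^sub>R B t) s =
     a' *\<^sub>R T s + a s *\<^sub>R covD g \<gamma> T s + b' *\<^sub>R N s + b s *\<^sub>R covD g \<gamma> N s
     + c' *\<^sub>R B s + c s *\<^sub>R covD g \<gamma> B s"
proof -
  have D: "DERIV (\<lambda>t. F t $ k) s :> deriv (\<lambda>t. F t $ k) s" if "\<And>k. (\<lambda>t. F t $ k) differentiable (at s)" for F :: "real \<Rightarrow> real^3" and k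
    using that DERIV_deriv_iff_real_differentiable by blast
  have der: "deriv (\<lambda>t. a t * T t $ k + b t * N t $ k + c t * B t $ k) s =
     a' * T s $ k + a s * deriv (\<lambda>t. T t $ k) s + b' * N s $ k + b s * deriv (\<lambda>t. N t $ k) s
     + c' * B s $ k + c s * deriv (\<lambda>t. B t $ k) s" for k
    by (rule DERIV_imp_deriv)
       (rule derivative_eq_intros da db dc D[OF dT] D[OF dN] D[OF dB] refl | simp)+
  have der': "deriv (\<lambda>t. a t * T t $ k + (b t * N t $ k + c t * B t $ k)) s =
     a' * T s $ k + a s * deriv (\<lambda>t. T t $ k) s + b' * N s $ k + b s * deriv (\<lambda>t. N t $ k) s
     + c' * B s $ k + c s * deriv (\<lambda>t. B t $ k) s" for k
    using der[of k] by (simp add: add.assoc)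
  show ?thesis
    unfolding covD_def vec_eq_iff
  proof
    fix k
    show "(\<chi> k. deriv (\<lambda>t. (a t *\<^sub>R T t + b t *\<^sub>R N t + c t *\<^sub>R B t) $ k) s +
          (\<Sum>i\<in>UNIV. \<Sum>j\<in>UNIV. christoffel g (\<gamma> s) k i j * vel \<gamma> s $ i * (a s *\<^sub>R T s + b s *\<^sub>R N s + c s *\<^sub>R B s) $ j)) $ k =
    (a' *\<^sub>R T s + a s *\<^sub>R (\<chi> k. deriv (\<lambda>t. T t $ k) s + (\<Sum>i\<in>UNIV. \<Sum>j\<in>UNIV. christoffel g (\<gamma> s) k i j * vel \<gamma> s $ i * T s $ j)) +
     b' *\<^sub>R N s + b s *\<^sub>R (\<chi> k. deriv (\<lambda>t. N t $ k) s + (\<Sum>i\<in>UNIV. \<Sum>j\<in>UNIV. christoffel g (\<gamma> s) k i j * vel \<gamma> s $ i * N s $ j)) +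
     c' *\<^sub>R B s + c s *\<^sub>R (\<chi> k. deriv (\<lambda>t. B t $ k) s + (\<Sum>i\<in>UNIV. \<Sum>j\<in>UNIV. christoffel g (\<gamma> s) k i j * vel \<gamma> s $ i * B s $ j))) $ k"
      apply (simp only: vec_lambda_beta vector_add_component vector_scaleR_component der)
      apply (simp add: sum_distrib_left algebra_simps sum.distrib der')
      done
  qed
qed

lemma ginner_sym:
  assumes "riemannian_metric U g" "x \<in> U"
  shows "ginner g x v w = ginner g x w v"
proof -
  have "ginner g x v w = (\<Sum>i\<in>UNIV. \<Sum>j\<in>UNIV. v $ i * g x $ i $ j * w $ j)"
    unfolding ginner_def inner_vec_def matrix_vector_mult_def by (simp add: sum_distrib_left mult.assoc)
  also have "\<dots> = (\<Sum>j\<in>UNIV. \<Sum>i\<in>UNIV. v $ i * g x $ i $ j * w $ j)" by (rule sum.swap)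
  also have "\<dots> = (\<Sum>j\<in>UNIV. \<Sum>i\<in>UNIV. w $ j * g x $ j $ i * v $ i)"
    using g_sym[OF assms] by (simp add: mult_ac)
  also have "\<dots> = ginner g x w v"
    unfolding ginner_def inner_vec_def matrix_vector_mult_def by (simp add: sum_distrib_left mult.assoc)
  finally show ?thesis .
qed

lemma ginner_add: "ginner g x (u + v) w = ginner g x u w + ginner g x v w"
  unfolding ginner_def by (simp add: inner_add_left)
lemma ginner_diff: "ginner g x (u - v) w = ginner g x u w - ginner g x v w"
  unfolding ginner_def by (simp add: inner_diff_left)
lemma ginner_scale: "ginner g x (c *\<^sub>R u) w = c * ginner g x u w"
  unfolding ginner_def by simp
lemma ginner_zero: "ginner g x 0 w = 0"
  unfolding ginner_def by simp

context
  fixes U g I \<gamma> N B \<kappa> \<tau>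
  assumes rm: "riemannian_metric U g" and ac: "arclength_curve U g I \<gamma>"
    and fr: "frenet g I \<gamma> N B \<kappa> \<tau>"
begin

lemma openI: "open I" using ac by (simp add: arclength_curve_def)

lemma dT: "s \<in> I \<Longrightarrow> (\<lambda>t. vel \<gamma> t $ k) differentiable (at s)"
proof -
  assume s: "s \<in> I"
  have "smooth_fun I (\<lambda>s. \<gamma> s $ k)" using ac by (simp add: arclength_curve_def smooth_vfield_def)
  then have "(deriv ^^ 1) (\<lambda>s. \<gamma> s $ k) differentiable (at s)" using s unfolding smooth_fun_def by blast
  moreover have "(\<lambda>t. vel \<gamma> t $ k) = deriv (\<lambda>s. \<gamma> s $ k)" by (simp add: vel_def)
  ultimately show ?thesis by simp
qed

lemma dN: "s \<in> I \<Longrightarrow> (\<lambda>t. N t $ k) differentiable (at s)"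
proof -
  assume s: "s \<in> I"
  have "smooth_fun I (\<lambda>s. N s $ k)" using fr by (simp add: frenet_def smooth_vfield_def)
  then have "(deriv ^^ 0) (\<lambda>s. N s $ k) differentiable (at s)" using s unfolding smooth_fun_def by blast
  then show ?thesis by simp
qed

lemma dB: "s \<in> I \<Longrightarrow> (\<lambda>t. B t $ k) differentiable (at s)"
proof -
  assume s: "s \<in> I"
  have "smooth_fun I (\<lambda>s. B s $ k)" using fr by (simp add: frenet_def smooth_vfield_def)
  then have "(deriv ^^ 0) (\<lambda>s. B s $ k) differentiable (at s)" using s unfolding smooth_fun_def by blast
  then show ?thesis by simp
qed

lemma fr_eqs: "s \<in> I \<Longrightarrow> covD g \<gamma> (vel \<gamma>) s = \<kappa> s *\<^sub>R N s \<and>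
             covD g \<gamma> N s = - \<kappa> s *\<^sub>R vel \<gamma> s + \<tau> s *\<^sub>R B s \<and>
             covD g \<gamma> B s = - \<tau> s *\<^sub>R N s"
  using fr by (simp add: frenet_def)

lemma step:
  assumes Vn: "\<forall>s\<in>I. nablaT g \<gamma> n s = a s *\<^sub>R vel \<gamma> s + b s *\<^sub>R N s + c s *\<^sub>R B s"
    and da: "\<forall>s\<in>I. (a has_real_derivative a' s) (at s)"
    and db: "\<forall>s\<in>I. (b has_real_derivative b' s) (at s)"
    and dc: "\<forall>s\<in>I. (c has_real_derivative c' s) (at s)"
    and e1: "\<forall>s\<in>I. a2 s = a' s - \<kappa> s * b s"
    and e2: "\<forall>s\<in>I. b2 s = b' s + \<kappa> s * a s - \<tau> s * c s"
    and e3: "\<forall>s\<in>I. c2 s = c' s + \<tau> s * b s"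
  shows "\<forall>s\<in>I. nablaT g \<gamma> (Suc n) s = a2 s *\<^sub>R vel \<gamma> s + b2 s *\<^sub>R N s + c2 s *\<^sub>R B s"
proof
  fix s assume s: "s \<in> I"
  have "nablaT g \<gamma> (Suc n) s = covD g \<gamma> (nablaT g \<gamma> n) s" by (simp add: nablaT_def)
  also have "\<dots> = covD g \<gamma> (\<lambda>t. a t *\<^sub>R vel \<gamma> t + b t *\<^sub>R N t + c t *\<^sub>R B t) s"
    by (rule covD_local[OF openI s]) (use Vn in blast)
  also have "\<dots> = a' s *\<^sub>R vel \<gamma> s + a s *\<^sub>R covD g \<gamma> (vel \<gamma>) s + b' s *\<^sub>R N s + b s *\<^sub>R covD g \<gamma> N s
     + c' s *\<^sub>R B s + c s *\<^sub>R covD g \<gamma> B s"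
    by (rule covD_comb) (use da db dc s dT dN dB in auto)
  also have "\<dots> = a2 s *\<^sub>R vel \<gamma> s + b2 s *\<^sub>R N s + c2 s *\<^sub>R B s"
  proof -
    have F: "covD g \<gamma> (vel \<gamma>) s = \<kappa> s *\<^sub>R N s" "covD g \<gamma> N s = - \<kappa> s *\<^sub>R vel \<gamma> s + \<tau> s *\<^sub>R B s"
      "covD g \<gamma> B s = - \<tau> s *\<^sub>R N s" using fr_eqs[OF s] by auto
    show ?thesis unfolding F e1[rule_format, OF s] e2[rule_format, OF s] e3[rule_format, OF s]
      by (simp add: algebra_simps)
  qed
  finally show "nablaT g \<gamma> (Suc n) s = a2 s *\<^sub>R vel \<gamma> s + b2 s *\<^sub>R N s + c2 s *\<^sub>R B s" .
qed

end

lemma smooth_derivs: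
  assumes "smooth_fun I f" "s \<in> I"
  shows "(f has_real_derivative deriv f s) (at s)"
    "(deriv f has_real_derivative deriv (deriv f) s) (at s)"
    "(deriv (deriv f) has_real_derivative deriv (deriv (deriv f)) s) (at s)"
    "(deriv (deriv (deriv f)) has_real_derivative deriv (deriv (deriv (deriv f))) s) (at s)"
    "(deriv (deriv (deriv (deriv f))) has_real_derivative deriv (deriv (deriv (deriv (deriv f)))) s) (at s)"
proof -
  have d: "(deriv ^^ n) f differentiable (at s)" for n using assms unfolding smooth_fun_def by blast
  show "(f has_real_derivative deriv f s) (at s)"
    using d[of 0] DERIV_deriv_iff_real_differentiable by simp
  show "(deriv f has_real_derivative deriv (deriv f) s) (at s)"
    using d[of 1] DERIV_deriv_iff_real_differentiable by simp
  show "(deriv (deriv f) has_real_derivative deriv (deriv (deriv f)) s) (at s)"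
    using d[of 2] DERIV_deriv_iff_real_differentiable by (simp add: numeral_2_eq_2)
  show "(deriv (deriv (deriv f)) has_real_derivative deriv (deriv (deriv (deriv f))) s) (at s)"
    using d[of 3] DERIV_deriv_iff_real_differentiable by (simp add: numeral_3_eq_3)
  show "(deriv (deriv (deriv (deriv f))) has_real_derivative deriv (deriv (deriv (deriv (deriv f)))) s) (at s)"
    using d[of 4] DERIV_deriv_iff_real_differentiable by (simp add: numeral_eq_Suc)
qed

theorem proposition4p1:
  fixes U :: "(real^3) set" and g :: metric and I :: "real set"
    and \<gamma> N B :: "real \<Rightarrow> real^3" and \<kappa> \<tau> :: "real \<Rightarrow> real"
  assumes "riemannian_metric U g"
    and "arclength_curve U g I \<gamma>"
    and "proper_triharmonic U g I \<gamma>"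
    and "frenet g I \<gamma> N B \<kappa> \<tau>"
  shows "\<forall>s\<in>I. 2 * deriv (\<lambda>t. (\<kappa> t)\<^sup>2 * deriv (deriv \<kappa>) t) s
               = \<kappa> s * deriv (\<lambda>t. (\<kappa> t)\<^sup>2 * ((\<kappa> t)\<^sup>2 + (\<tau> t)\<^sup>2)) s"
proof -
  note rm = assms(1) and ac = assms(2) and fr = assms(4)
  define K1 where "K1 = deriv \<kappa>"
  define K2 where "K2 = deriv K1"
  define K3 where "K3 = deriv K2"
  define K4 where "K4 = deriv K3"
  define T1 where "T1 = deriv \<tau>"
  define T2 where "T2 = deriv T1"
  define T3 where "T3 = deriv T2"
  define T4 where "T4 = deriv T3"
  have smk: "smooth_fun I \<kappa>" and smt: "smooth_fun I \<tau>" using fr by (simp_all add: frenet_def)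
  have D\<kappa>: "\<And>s. s \<in> I \<Longrightarrow> (\<kappa> has_real_derivative K1 s) (at s)"
   and DK1: "\<And>s. s \<in> I \<Longrightarrow> (K1 has_real_derivative K2 s) (at s)"
   and DK2: "\<And>s. s \<in> I \<Longrightarrow> (K2 has_real_derivative K3 s) (at s)"
   and DK3: "\<And>s. s \<in> I \<Longrightarrow> (K3 has_real_derivative K4 s) (at s)"
    using smooth_derivs[OF smk] unfolding K1_def K2_def K3_def K4_def by blast+
  have D\<tau>: "\<And>s. s \<in> I \<Longrightarrow> (\<tau> has_real_derivative T1 s) (at s)"
   and DT1: "\<And>s. s \<in> I \<Longrightarrow> (T1 has_real_derivative T2 s) (at s)"
   and DT2: "\<And>s. s \<in> I \<Longrightarrow> (T2 has_real_derivative T3 s) (at s)"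
   and DT3: "\<And>s. s \<in> I \<Longrightarrow> (T3 has_real_derivative T4 s) (at s)"
    using smooth_derivs[OF smt] unfolding T1_def T2_def T3_def T4_def by blast+
  note DD = D\<kappa> DK1 DK2 DK3 D\<tau> DT1 DT2 DT3
  have N0: "\<forall>s\<in>I. nablaT g \<gamma> 0 s = (\<lambda>_. 1) s *\<^sub>R vel \<gamma> s + (\<lambda>_. 0) s *\<^sub>R N s + (\<lambda>_. 0) s *\<^sub>R B s"
    by (simp add: nablaT_def)
  have N1: "\<forall>s\<in>I. nablaT g \<gamma> (Suc 0) s = (\<lambda>_. 0) s *\<^sub>R vel \<gamma> s + \<kappa> s *\<^sub>R N s + (\<lambda>_. 0) s *\<^sub>R B s"
    by (rule step[OF rm ac fr N0, where a'="\<lambda>_. 0" and b'="\<lambda>_. 0" and c'="\<lambda>_. 0"])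
       (auto simp: )
  have N2: "\<forall>s\<in>I. nablaT g \<gamma> (Suc (Suc 0)) s = (\<lambda>s. - (\<kappa> s * \<kappa> s)) s *\<^sub>R vel \<gamma> s + K1 s *\<^sub>R N s
      + (\<lambda>s. \<kappa> s * \<tau> s) s *\<^sub>R B s"
    by (rule step[OF rm ac fr N1, where a'="\<lambda>_. 0" and b'="K1" and c'="\<lambda>_. 0"])
       (auto simp: intro: D\<kappa>[unfolded ])
  have N3: "\<forall>s\<in>I. nablaT g \<gamma> (Suc (Suc (Suc 0))) s = (\<lambda>s. -3 * \<kappa> s * K1 s) s *\<^sub>R vel \<gamma> s
      + (\<lambda>s. K2 s - \<kappa> s * \<kappa> s * \<kappa> s - \<kappa> s * \<tau> s * \<tau> s) s *\<^sub>R N s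
      + (\<lambda>s. 2 * K1 s * \<tau> s + \<kappa> s * T1 s) s *\<^sub>R B s"
    by (rule step[OF rm ac fr N2, where a'="\<lambda>s. - (K1 s * \<kappa> s + \<kappa> s * K1 s)" and b'="K2"
          and c'="\<lambda>s. K1 s * \<tau> s + \<kappa> s * T1 s"])
       (auto intro!: derivative_eq_intros DD simp: algebra_simps)
  have N4: "\<forall>s\<in>I. nablaT g \<gamma> (Suc (Suc (Suc (Suc 0)))) s =
        (\<lambda>s. -3 * K1 s * K1 s - 4 * \<kappa> s * K2 s + \<kappa> s * \<kappa> s * \<kappa> s * \<kappa> s + \<kappa> s * \<kappa> s * \<tau> s * \<tau> s) s *\<^sub>R vel \<gamma> s
      + (\<lambda>s. K3 s - 6 * \<kappa> s * \<kappa> s * K1 s - 3 * K1 s * \<tau> s * \<tau> s - 3 * \<kappa> s * \<tau> s * T1 s) s *\<^sub>R N s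
      + (\<lambda>s. 3 * K2 s * \<tau> s + 3 * K1 s * T1 s + \<kappa> s * T2 s - \<kappa> s * \<kappa> s * \<kappa> s * \<tau> s - \<kappa> s * \<tau> s * \<tau> s * \<tau> s) s *\<^sub>R B s"
    by (rule step[OF rm ac fr N3, where a'="\<lambda>s. -3 * (K1 s * K1 s + \<kappa> s * K2 s)"
          and b'="\<lambda>s. K3 s - 3 * \<kappa> s * \<kappa> s * K1 s - (K1 s * \<tau> s * \<tau> s + 2 * \<kappa> s * \<tau> s * T1 s)"
          and c'="\<lambda>s. 2 * (K2 s * \<tau> s + K1 s * T1 s) + K1 s * T1 s + \<kappa> s * T2 s"])
       (auto intro!: derivative_eq_intros DD simp: algebra_simps)
  define f5 where "f5 s = -10 * K1 s * K2 s - 5 * \<kappa> s * K3 s + 10 * \<kappa> s * \<kappa> s * \<kappa> s * K1 s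
      + 5 * \<kappa> s * K1 s * \<tau> s * \<tau> s + 5 * \<kappa> s * \<kappa> s * \<tau> s * T1 s" for s
  have "\<exists>b5 c5. \<forall>s\<in>I. nablaT g \<gamma> (Suc (Suc (Suc (Suc (Suc 0))))) s = f5 s *\<^sub>R vel \<gamma> s + b5 s *\<^sub>R N s + c5 s *\<^sub>R B s"
    apply (rule exI, rule exI)
    apply (rule step[OF rm ac fr N4, where a'="\<lambda>s. -6 * K1 s * K2 s - 4 * (K1 s * K2 s + \<kappa> s * K3 s)
       + 4 * \<kappa> s * \<kappa> s * \<kappa> s * K1 s + 2 * \<kappa> s * K1 s * \<tau> s * \<tau> s + 2 * \<kappa> s * \<kappa> s * \<tau> s * T1 s"])
    prefer 5 apply (rule ballI, rule refl)
    prefer 5 apply (rule ballI, rule refl)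
    apply (auto intro!: derivative_eq_intros DD simp: algebra_simps f5_def)
    done
  then obtain b5 c5 where N5: "\<forall>s\<in>I. nablaT g \<gamma> 5 s = f5 s *\<^sub>R vel \<gamma> s + b5 s *\<^sub>R N s + c5 s *\<^sub>R B s"
    by (auto simp: numeral_eq_Suc)
  show ?thesis
  proof
    fix s assume s: "s \<in> I"
    have \<gamma>U: "\<gamma> s \<in> U" using ac s by (simp add: arclength_curve_def)
    have tri: "nablaT g \<gamma> 5 s + curvR g (\<gamma> s) (nablaT g \<gamma> 3 s) (vel \<gamma> s) (vel \<gamma> s)
       - curvR g (\<gamma> s) (nablaT g \<gamma> 2 s) (nablaT g \<gamma> 1 s) (vel \<gamma> s) = 0"
      using assms(3) s by (simp add: proper_triharmonic_def triharmonic_def)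
    have TT: "ginner g (\<gamma> s) (vel \<gamma> s) (vel \<gamma> s) = 1" using ac s by (simp add: arclength_curve_def)
    have TN: "ginner g (\<gamma> s) (vel \<gamma> s) (N s) = 0" and TB: "ginner g (\<gamma> s) (vel \<gamma> s) (B s) = 0"
      using fr s by (simp_all add: frenet_def Let_def)
    have NT: "ginner g (\<gamma> s) (N s) (vel \<gamma> s) = 0" using TN ginner_sym[OF rm \<gamma>U] by metis
    have BT: "ginner g (\<gamma> s) (B s) (vel \<gamma> s) = 0" using TB ginner_sym[OF rm \<gamma>U] by metis
    have "0 = ginner g (\<gamma> s) (nablaT g \<gamma> 5 s + curvR g (\<gamma> s) (nablaT g \<gamma> 3 s) (vel \<gamma> s) (vel \<gamma> s)
       - curvR g (\<gamma> s) (nablaT g \<gamma> 2 s) (nablaT g \<gamma> 1 s) (vel \<gamma> s)) (vel \<gamma> s)"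
      unfolding tri by (simp add: ginner_zero)
    also have "\<dots> = ginner g (\<gamma> s) (nablaT g \<gamma> 5 s) (vel \<gamma> s)"
      unfolding ginner_add ginner_diff curv_ginner_zero[OF rm \<gamma>U] by simp
    also have "\<dots> = f5 s"
      unfolding N5[rule_format, OF s] ginner_add ginner_scale TT NT BT by simp
    finally have f5z: "f5 s = 0" by simp
    have dd: "deriv (deriv \<kappa>) = K2" by (simp add: K1_def K2_def)
    have d1: "deriv (\<lambda>t. (\<kappa> t)\<^sup>2 * K2 t) s = 2 * \<kappa> s * K1 s * K2 s + \<kappa> s * \<kappa> s * K3 s"
      by (rule DERIV_imp_deriv) (use s in \<open>auto intro!: derivative_eq_intros DD simp: algebra_simps power2_eq_square\<close>)
    have d2: "deriv (\<lambda>t. (\<kappa> t)\<^sup>2 * ((\<kappa> t)\<^sup>2 + (\<tau> t)\<^sup>2)) s =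
        4 * \<kappa> s * \<kappa> s * \<kappa> s * K1 s + 2 * \<kappa> s * K1 s * \<tau> s * \<tau> s + 2 * \<kappa> s * \<kappa> s * \<tau> s * T1 s"
      by (rule DERIV_imp_deriv) (use s in \<open>auto intro!: derivative_eq_intros DD simp: algebra_simps power2_eq_square\<close>)
    have "2 * (2 * \<kappa> s * K1 s * K2 s + \<kappa> s * \<kappa> s * K3 s)
        - \<kappa> s * (4 * \<kappa> s * \<kappa> s * \<kappa> s * K1 s + 2 * \<kappa> s * K1 s * \<tau> s * \<tau> s + 2 * \<kappa> s * \<kappa> s * \<tau> s * T1 s)
        = -(2/5) * (\<kappa> s * f5 s)"
      unfolding f5_def by (simp add: algebra_simps)
    then show "2 * deriv (\<lambda>t. (\<kappa> t)\<^sup>2 * deriv (deriv \<kappa>) t) s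
               = \<kappa> s * deriv (\<lambda>t. (\<kappa> t)\<^sup>2 * ((\<kappa> t)\<^sup>2 + (\<tau> t)\<^sup>2)) s"
      unfolding dd d1 d2 f5z by simp
  qed
qed


end
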